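(* Let $\langle M,\mathsf{S}\rangle$ be a sum structure. Then for all $x\in M$ and $X\subseteq M$: if $x\,\mathsf{S}_{\sqsubseteq_{\mathsf{S}}}\,X$ then $x\,\mathsf{S}\,X$.
   Context: For a set $M$ and a relation $\mathsf{S}\subseteq M\times\mathcal{P}(M)$ define: $x\sqsubseteq_{\mathsf{S}} y$ iff there is $X\subseteq M$ with $y\,\mathsf{S}\,X$ and $x\in X$; $\mathrm{I}(x)=\{y\in M\mid y\sqsubseteq_{\mathsf{S}} x\}$ and for $A\subseteq M$, $\mathrm{I}(A)=\bigcup_{a\in A}\mathrm{I}(a)$; $x$ s-overlaps $y$ iff there are $X,Y\subseteq M$ with $x\,\mathsf{S}\,X$, $y\,\mathsf{S}\,Y$, $X\cap Y\neq\emptyset$; a set $A\subseteq M$ is pre-dense in $B\subseteq M$ iff for every $b\in B$ there is $a\in A$ such that $a$ s-overlaps $b$. Overlap w.r.t. $\sqsubseteq_{\mathsf{S}}$: $x\circ y$ iff there is $z\in M$ with $z\sqsubseteq_{\mathsf{S}} x$ and $z\sqsubseteq_{\mathsf{S}} y$. The induced sum: $x\,\mathsf{S}_{\sqsubseteq_{\mathsf{S}}}\,X$ iff every $y\in X$ satisfies $y\sqsubseteq_{\mathsf{S}} x$, and for every $z\in M$ with $z\sqsubseteq_{\mathsf{S}} x$ there is $y\in X$ with $y\circ z$. A sum structure is a pair $\langle M,\mathsf{S}\rangle$ satisfying: (S1) for every non-empty $X\subseteq M$ there is $x\in M$ with $x\,\mathsf{S}\,X$; (S2) $x\,\mathsf{S}\,X\wedge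 y\,\mathsf{S}\,X\to x=y$; (S3) $x\,\mathsf{S}\,X\wedge y\,\mathsf{S}\,Y\wedge x\in Y\to y\,\mathsf{S}\,(X\cup Y)$; (S4) if $x\,\mathsf{S}\,X$, $x\,\mathsf{S}\,Y$ and $y\in Y$, then there are $z\in X$ and $Z,U\subseteq M$ with $z\,\mathsf{S}\,Z$, $y\,\mathsf{S}\,U$ and $Z\cap U\neq\emptyset$; (S5) for all $x\in M$ and $X\subseteq M$: if $X$ is pre-dense in $\mathrm{I}(x)$ then $x\,\mathsf{S}\,(\mathrm{I}(x)\cap\mathrm{I}(X))$. *)

theory Defs
  imports Main
begin

definition spart :: "'a set \<Rightarrow> ('a \<Rightarrow> 'a set \<Rightarrow> bool) \<Rightarrow> 'a \<Rightarrow> 'a \<Rightarrow> bool" where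
  "spart M S x y \<longleftrightarrow> (\<exists>X. X \<subseteq> M \<and> S y X \<and> x \<in> X)"

definition Ideal :: "'a set \<Rightarrow> ('a \<Rightarrow> 'a set \<Rightarrow> bool) \<Rightarrow> 'a \<Rightarrow> 'a set" where
  "Ideal M S x = {y \<in> M. spart M S y x}"

definition IdealSet :: "'a set \<Rightarrow> ('a \<Rightarrow> 'a set \<Rightarrow> bool) \<Rightarrow> 'a set \<Rightarrow> 'a set" where
  "IdealSet M S A = (\<Union>a\<in>A. Ideal M S a)"

definition soverlap :: "'a set \<Rightarrow> ('a \<Rightarrow> 'a set \<Rightarrow> bool) \<Rightarrow> 'a \<Rightarrow> 'a \<Rightarrow> bool" where
  "soverlap M S x y \<longleftrightarrow> (\<exists>X Y. X \<subseteq> M \<and> Y \<subseteq> M \<and> S x X \<and> S y Y \<and> X \<inter> Y \<noteq> {})"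

definition predense :: "'a set \<Rightarrow> ('a \<Rightarrow> 'a set \<Rightarrow> bool) \<Rightarrow> 'a set \<Rightarrow> 'a set \<Rightarrow> bool" where
  "predense M S A B \<longleftrightarrow> (\<forall>b\<in>B. \<exists>a\<in>A. soverlap M S a b)"

definition ovlp :: "'a set \<Rightarrow> ('a \<Rightarrow> 'a set \<Rightarrow> bool) \<Rightarrow> 'a \<Rightarrow> 'a \<Rightarrow> bool" where
  "ovlp M S x y \<longleftrightarrow> (\<exists>z\<in>M. spart M S z x \<and> spart M S z y)"

definition induced_sum :: "'a set \<Rightarrow> ('a \<Rightarrow> 'a set \<Rightarrow> bool) \<Rightarrow> 'a \<Rightarrow> 'a set \<Rightarrow> bool" where
  "induced_sum M S x X \<longleftrightarrow>
     (\<forall>y\<in>X. spart M S y x) \<and> (\<forall>z\<in>M. spart M S z x \<longrightarrow> (\<exists>y\<in>X. ovlp M S y z))"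

definition sum_structure :: "'a set \<Rightarrow> ('a \<Rightarrow> 'a set \<Rightarrow> bool) \<Rightarrow> bool" where
  "sum_structure M S \<longleftrightarrow>
     (\<forall>x X. S x X \<longrightarrow> x \<in> M \<and> X \<subseteq> M) \<and>
     (\<forall>X. X \<subseteq> M \<and> X \<noteq> {} \<longrightarrow> (\<exists>x\<in>M. S x X)) \<and>
     (\<forall>x y X. S x X \<and> S y X \<longrightarrow> x = y) \<and>
     (\<forall>x y X Y. S x X \<and> S y Y \<and> x \<in> Y \<longrightarrow> S y (X \<union> Y)) \<and>
     (\<forall>x X Y y. S x X \<and> S x Y \<and> y \<in> Y \<longrightarrow>
        (\<exists>z\<in>X. \<exists>Z U. Z \<subseteq> M \<and> U \<subseteq> M \<and> S z Z \<and> S y U \<and> Z \<inter> U \<noteq> {})) \<and>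
     (\<forall>x\<in>M. \<forall>X. X \<subseteq> M \<and> predense M S X (Ideal M S x) \<longrightarrow>
        S x (Ideal M S x \<inter> IdealSet M S X))"

end

theory Submission
  imports Defs
begin

lemma ax_all1: assumes "sum_structure M S" shows "(\<forall>x X. S x X \<longrightarrow> x \<in> M \<and> X \<subseteq> M)"
  using assms unfolding sum_structure_def by (elim conjE) assumption

lemma ax_all2: assumes "sum_structure M S" shows "(\<forall>X. X \<subseteq> M \<and> X \<noteq> {} \<longrightarrow> (\<exists>x\<in>M. S x X))"
  using assms unfolding sum_structure_def by (elim conjE) assumption

lemma ax_all3: assumes "sum_structure M S" shows "(\<forall>x y X. S x X \<and> S y X \<longrightarrow> x = y)"
  using assms unfolding sum_structure_def by (elim conjE) assumption

lemma ax_all4: assumes "sum_structure M S" shows "(\<forall>x y X Y. S x X \<and> S y Y \<and> x \<in> Y \<longrightarrow> S y (X \<union> Y))"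
  using assms unfolding sum_structure_def by (elim conjE) assumption

lemma ax_all5: assumes "sum_structure M S" shows "(\<forall>x X Y y. S x X \<and> S x Y \<and> y \<in> Y \<longrightarrow>
        (\<exists>z\<in>X. \<exists>Z U. Z \<subseteq> M \<and> U \<subseteq> M \<and> S z Z \<and> S y U \<and> Z \<inter> U \<noteq> {}))"
  using assms unfolding sum_structure_def by (elim conjE) assumption

lemma ax_all6: assumes "sum_structure M S" shows "(\<forall>x\<in>M. \<forall>X. X \<subseteq> M \<and> predense M S X (Ideal M S x) \<longrightarrow>
        S x (Ideal M S x \<inter> IdealSet M S X))"
  using assms unfolding sum_structure_def by (elim conjE) assumption

lemma ax0: assumes "sum_structure M S" "S x X" shows "x \<in> M \<and> X \<subseteq> M"
  using ax_all1[OF assms(1)] assms(2) by blast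
lemma ax1: assumes "sum_structure M S" "X \<subseteq> M" "X \<noteq> {}" shows "\<exists>x\<in>M. S x X"
  using ax_all2[OF assms(1)] assms(2,3) by blast
lemma ax2: assumes "sum_structure M S" "S x X" "S y X" shows "x = y"
  using ax_all3[OF assms(1)] assms(2,3) by blast
lemma ax3: assumes "sum_structure M S" "S x X" "S y Y" "x \<in> Y" shows "S y (X \<union> Y)"
  using ax_all4[OF assms(1)] assms(2-4) by blast
lemma ax4: assumes "sum_structure M S" "S x X" "S x Y" "y \<in> Y" shows
        "\<exists>z\<in>X. \<exists>Z U. Z \<subseteq> M \<and> U \<subseteq> M \<and> S z Z \<and> S y U \<and> Z \<inter> U \<noteq> {}"
  using ax_all5[OF assms(1), rule_format, of x X Y y] assms(2-4) by blast
lemma ax5: assumes "sum_structure M S" "x \<in> M" "A \<subseteq> M" "predense M S A (Ideal M S x)" shows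
        "S x (Ideal M S x \<inter> IdealSet M S A)"
  using ax_all6[OF assms(1), rule_format, of x A] assms(2-4) by blast

lemma spart_trans:
  assumes ss: "sum_structure M S" and "spart M S v y" and "spart M S y x"
  shows "spart M S v x"
proof -
  from assms(2) obtain V where V: "V \<subseteq> M" "S y V" "v \<in> V" unfolding spart_def by blast
  from assms(3) obtain Y where Y: "Y \<subseteq> M" "S x Y" "y \<in> Y" unfolding spart_def by blast
  have "S x (V \<union> Y)" using ax3[OF ss V(2) Y(2) Y(3)] .
  thus ?thesis using V Y unfolding spart_def by (intro exI[of _ "V \<union> Y"]) auto
qed

lemma S5':
  assumes ss: "sum_structure M S" and "x \<in> M" "A \<subseteq> M" "predense M S A (Ideal M S x)"
  shows "S x (Ideal M S x \<inter> IdealSet M S A)"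
  using ax5[OF assms] .

theorem lemma3p11:
  fixes M :: "'a set" and S :: "'a \<Rightarrow> 'a set \<Rightarrow> bool"
  assumes "sum_structure M S"
    and "x \<in> M" and "X \<subseteq> M"
    and "induced_sum M S x X"
  shows "S x X"
proof -
  note ss = assms(1)
  have pdx: "predense M S X (Ideal M S x)"
    unfolding predense_def
  proof
    fix b assume "b \<in> Ideal M S x"
    hence "b \<in> M" "spart M S b x" unfolding Ideal_def by auto
    then obtain y where y: "y \<in> X" "ovlp M S y b" using assms(4) unfolding induced_sum_def by blast
    then obtain w where "w \<in> M" "spart M S w y" "spart M S w b" unfolding ovlp_def by blast
    then obtain Y B where "Y \<subseteq> M" "S y Y" "w \<in> Y" "B \<subseteq> M" "S b B" "w \<in> B" unfolding spart_def by blast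
    hence "soverlap M S y b" unfolding soverlap_def by (intro exI[of _ Y] exI[of _ B]) auto
    thus "\<exists>a\<in>X. soverlap M S a b" using y by blast
  qed
  have Sx: "S x (Ideal M S x \<inter> IdealSet M S X)" using S5'[OF ss assms(2,3) pdx] .
  show ?thesis
  proof (cases "X = {}")
    case True
    then show ?thesis using Sx unfolding IdealSet_def by simp
  next
    case False
    then obtain w where w: "w \<in> M" "S w X" using ax1[OF ss assms(3)] by blast
    have pdw: "predense M S X (Ideal M S w)"
      unfolding predense_def
    proof
      fix b assume "b \<in> Ideal M S w"
      then obtain B where B: "S w B" "b \<in> B" unfolding Ideal_def spart_def by blast
      then obtain z Z U where "z \<in> X" "Z \<subseteq> M" "U \<subseteq> M" "S z Z" "S b U" "Z \<inter> U \<noteq> {}"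
        using ax4[OF ss w(2) B] by blast
      hence "soverlap M S z b" unfolding soverlap_def by (intro exI[of _ Z] exI[of _ U]) auto
      thus "\<exists>a\<in>X. soverlap M S a b" using \<open>z \<in> X\<close> by blast
    qed
    have Sw: "S w (Ideal M S w \<inter> IdealSet M S X)" using S5'[OF ss w(1) assms(3) pdw] .
    have "IdealSet M S X \<subseteq> Ideal M S w"
    proof
      fix v assume "v \<in> IdealSet M S X"
      then obtain y where "y \<in> X" "v \<in> M" "spart M S v y" unfolding IdealSet_def Ideal_def by blast
      moreover have "spart M S y w" using \<open>y \<in> X\<close> w assms(3) unfolding spart_def by (intro exI[of _ X]) auto
      ultimately show "v \<in> Ideal M S w" using spart_trans[OF ss] unfolding Ideal_def by blast
    qed
    moreover have "IdealSet M S X \<subseteq> Ideal M S x"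
    proof
      fix v assume "v \<in> IdealSet M S X"
      then obtain y where "y \<in> X" "v \<in> M" "spart M S v y" unfolding IdealSet_def Ideal_def by blast
      moreover have "spart M S y x" using \<open>y \<in> X\<close> assms(4) unfolding induced_sum_def by blast
      ultimately show "v \<in> Ideal M S x" using spart_trans[OF ss] unfolding Ideal_def by blast
    qed
    ultimately have e1: "Ideal M S w \<inter> IdealSet M S X = IdealSet M S X"
      and e2: "Ideal M S x \<inter> IdealSet M S X = IdealSet M S X" by blast+
    have "S w (IdealSet M S X)" "S x (IdealSet M S X)" using Sw Sx unfolding e1 e2 by auto
    hence "w = x" using ax2[OF ss] by blast
    thus ?thesis using w by simp
  qed
qed

end
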